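(* Let $A$ be a circular $m\times n$ matrix and let $\Gamma$ be a circuit in $D(A)$. Then $(\pi_+-\pi_-)^T\tilde A=p(\Gamma)\mathbf{1}^T$.
   Context: Notation: $[n]=\{1,\dots,n\}$ with addition mod $n$ (index $0$ identified with $n$); for $a,c\in[n]$ with $t\ge0$ minimal such that $a+t\equiv c\pmod n$, $[a,c)_n=\{a,\dots,a+t-1\}$ (mod $n$). An $m\times n$ $\{0,1\}$-matrix $A$ is circular if for each row $i$ there are $\ell_i\in[n]$ and an integer $2\le k_i\le n-1$ with row $i$ the incidence vector of $[\ell_i,\ell_i+k_i)_n$. $\tilde A=\binom{A}{I}\in\{0,1\}^{(m+n)\times n}$ with $I$ the $n\times n$ identity. $D(A)$: node set $[n]$ (labels mod $n$); forward arcs $a_i=(\ell_i-1,\ell_i+k_i-1)$ ($i\in[m]$, length $k_i$) and $a_{m+j}=(j-1,j)$ ($j\in[n]$, length $1$); reverse arcs $\bar a_i=(\ell_i+k_i-1,\ell_i-1)$ (length $-k_i$) and $\bar a_{m+j}=(j,j-1)$ (length $-1$). A circuit is a simple directed circuit; its winding number $p(\Gamma)$ satisfies $p(\Gamma)n=\sum_{a\in E(\Gamma)}l(a)$. $\pi_+\in\{0,1\}^{m+n}$ has $(\pi_+)_k=1$ iff $a_k\in E(\Gamma)$, and $\pi_-\in\{0,1\}^{m+n}$ has $(\pi_-)_k=1$ iff $\bar a_k\in E(\Gamma)$. *)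

theory Defs
  imports Complex_Main "HOL-Number_Theory.Cong"
begin

text \<open>Labels mod n: representative in [n] = {1..n} (0 identified with n).\<close>
definition mod1 :: "nat \<Rightarrow> int \<Rightarrow> nat" where
  "mod1 n x = nat ((x - 1) mod int n) + 1"

text \<open>Cyclic interval [a,c)_n.\<close>
definition cint :: "nat \<Rightarrow> nat \<Rightarrow> nat \<Rightarrow> nat set" where
  "cint n a c = (let t = (LEAST t::nat. [a + t = c] (mod n))
                 in {mod1 n (int a + int s) | s. s < t})"

definition circular_rep ::
  "nat \<Rightarrow> nat \<Rightarrow> (nat \<Rightarrow> nat \<Rightarrow> int) \<Rightarrow> (nat \<Rightarrow> nat) \<Rightarrow> (nat \<Rightarrow> nat) \<Rightarrow> bool" where
  "circular_rep m n A l k \<longleftrightarrow>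
     (\<forall>i\<in>{1..m}. l i \<in> {1..n} \<and> 2 \<le> k i \<and> k i \<le> n - 1 \<and>
        (\<forall>j\<in>{1..n}. A i j =
           (if j \<in> cint n (l i) (mod1 n (int (l i) + int (k i))) then 1 else 0)))"

definition circular :: "nat \<Rightarrow> nat \<Rightarrow> (nat \<Rightarrow> nat \<Rightarrow> int) \<Rightarrow> bool" where
  "circular m n A \<longleftrightarrow> (\<exists>l k. circular_rep m n A l k)"

text \<open>\<tilde>A = (A ; I), rows 1..m+n, columns 1..n.\<close>
definition Atilde :: "nat \<Rightarrow> (nat \<Rightarrow> nat \<Rightarrow> int) \<Rightarrow> nat \<Rightarrow> nat \<Rightarrow> int" where
  "Atilde m A r j = (if r \<le> m then A r j else (if r - m = j then 1 else 0))"

text \<open>Arcs of D(A): (True, idx) is the forward arc a_idx, (False, idx) the reverse arc.\<close>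
type_synonym arc = "bool \<times> nat"

definition arcs :: "nat \<Rightarrow> nat \<Rightarrow> arc set" where
  "arcs m n = {(d, r) | d r. r \<in> {1..m+n}}"

definition fwd_tail :: "nat \<Rightarrow> nat \<Rightarrow> (nat \<Rightarrow> nat) \<Rightarrow> nat \<Rightarrow> nat" where
  "fwd_tail m n l r = (if r \<le> m then mod1 n (int (l r) - 1) else mod1 n (int (r - m) - 1))"

definition fwd_head :: "nat \<Rightarrow> nat \<Rightarrow> (nat \<Rightarrow> nat) \<Rightarrow> (nat \<Rightarrow> nat) \<Rightarrow> nat \<Rightarrow> nat" where
  "fwd_head m n l k r = (if r \<le> m then mod1 n (int (l r) + int (k r) - 1) else mod1 n (int (r - m)))"

definition fwd_len :: "nat \<Rightarrow> (nat \<Rightarrow> nat) \<Rightarrow> nat \<Rightarrow> int" where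
  "fwd_len m k r = (if r \<le> m then int (k r) else 1)"

definition arc_tail :: "nat \<Rightarrow> nat \<Rightarrow> (nat \<Rightarrow> nat) \<Rightarrow> (nat \<Rightarrow> nat) \<Rightarrow> arc \<Rightarrow> nat" where
  "arc_tail m n l k e = (if fst e then fwd_tail m n l (snd e) else fwd_head m n l k (snd e))"

definition arc_head :: "nat \<Rightarrow> nat \<Rightarrow> (nat \<Rightarrow> nat) \<Rightarrow> (nat \<Rightarrow> nat) \<Rightarrow> arc \<Rightarrow> nat" where
  "arc_head m n l k e = (if fst e then fwd_head m n l k (snd e) else fwd_tail m n l (snd e))"

definition arc_len :: "nat \<Rightarrow> (nat \<Rightarrow> nat) \<Rightarrow> arc \<Rightarrow> int" where
  "arc_len m k e = (if fst e then fwd_len m k (snd e) else - fwd_len m k (snd e))"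

definition is_circuit :: "nat \<Rightarrow> nat \<Rightarrow> (nat \<Rightarrow> nat) \<Rightarrow> (nat \<Rightarrow> nat) \<Rightarrow> arc list \<Rightarrow> bool" where
  "is_circuit m n l k cs \<longleftrightarrow> cs \<noteq> [] \<and> distinct cs \<and> set cs \<subseteq> arcs m n \<and>
     (\<forall>i < length cs. arc_head m n l k (cs ! i) = arc_tail m n l k (cs ! ((i + 1) mod length cs))) \<and>
     distinct (map (arc_tail m n l k) cs)"

definition winding :: "nat \<Rightarrow> nat \<Rightarrow> (nat \<Rightarrow> nat) \<Rightarrow> arc list \<Rightarrow> real" where
  "winding m n k cs = real_of_int (\<Sum>e\<in>set cs. arc_len m k e) / real n"

definition pi_plus :: "arc list \<Rightarrow> nat \<Rightarrow> int" where
  "pi_plus cs r = (if (True, r) \<in> set cs then 1 else 0)"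

definition pi_minus :: "arc list \<Rightarrow> nat \<Rightarrow> int" where
  "pi_minus cs r = (if (False, r) \<in> set cs then 1 else 0)"

end

theory Submission imports Defs begin

lemma core:
  fixes U L j n :: int
  assumes L: "0 < L" "L \<le> n"
  shows "(if \<exists>s. 0 \<le> s \<and> s < L \<and> (U+1+s) mod n = j mod n then 1 else 0)
         = (U+L-j) div n - (U-j) div n"
proof -
  define w where "w = (U-j) mod n"
  define q where "q = (U-j) div n"
  have n: "n > 0" using L by simp
  have eq: "U - j = n*q + w" unfolding w_def q_def by simp
  have w: "0 \<le> w" "w < n" unfolding w_def using n by auto
  have d1: "(U+L-j) div n = q + (w+L) div n"
  proof -
    have "U+L-j = (w+L) + q*n" using eq by (simp add: algebra_simps)
    then have "(U+L-j) div n = ((w+L) + q*n) div n" by (simp only: \<open>U+L-j = (w+L) + q*n\<close>)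
    also have "\<dots> = (w+L) div n + q" using n by simp
    finally show ?thesis by simp
  qed
  have d2: "(w+L) div n = (if w + L \<ge> n then 1 else 0)"
  proof (cases "w+L \<ge> n")
    case True
    have "(w+L) div n = ((w+L-n) + n) div n" by simp
    also have "\<dots> = (w+L-n) div n + 1" using n by (simp only: div_add_self2 less_irrefl)
    also have "(w+L-n) div n = 0" using True w L by (simp add: div_pos_pos_trivial)
    finally show ?thesis using True by simp
  next
    case False
    then show ?thesis using w L by (simp add: div_pos_pos_trivial)
  qed
  have P: "(\<exists>s. 0 \<le> s \<and> s < L \<and> (U+1+s) mod n = j mod n) \<longleftrightarrow> w + L \<ge> n"
  proof
    assume "\<exists>s. 0 \<le> s \<and> s < L \<and> (U+1+s) mod n = j mod n"
    then obtain s where s: "0 \<le> s" "s < L" "(U+1+s) mod n = j mod n" by blast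
    have "(U+1+s - j) mod n = 0" using s(3) by (simp add: mod_eq_dvd_iff)
    moreover have "U+1+s-j = (w+1+s) + q*n" using eq by (simp add: algebra_simps)
    ultimately have "(w+1+s) mod n = 0" by simp
    then have "n dvd (w+1+s)" by auto
    then obtain c where c: "w+1+s = n*c" by auto
    have "c \<ge> 1" using c w s n
      by (smt (verit, best) mult_le_0_iff)
    then have "n*c \<ge> n" using n by simp
    then show "w+L \<ge> n" using c s by simp
  next
    assume a: "w + L \<ge> n"
    define s where "s = n - 1 - w"
    have "U+1+s - j = 0 + q*n + n" using eq unfolding s_def by (simp add: algebra_simps)
    then have "(U+1+s - j) mod n = 0" by simp
    then have "(U+1+s) mod n = j mod n" by (simp add: mod_eq_dvd_iff dvd_eq_mod_eq_0)
    moreover have "0 \<le> s" "s < L" using w a unfolding s_def by auto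
    ultimately show "\<exists>s. 0 \<le> s \<and> s < L \<and> (U+1+s) mod n = j mod n" by blast
  qed
  show ?thesis using P d1 d2 unfolding q_def by simp
qed

lemma mod1_shift:
  assumes "n > 0"
  shows "int (mod1 n x) = x + int n * (- ((x-1) div int n))"
proof -
  have "(x-1) mod int n \<ge> 0" using assms by simp
  then have "int (mod1 n x) = (x-1) mod int n + 1" unfolding mod1_def by simp
  also have "(x-1) mod int n = (x-1) - int n * ((x-1) div int n)" by (simp add: minus_div_mult_eq_mod [symmetric])
  finally show ?thesis by simp
qed

lemma gen:
  fixes U L :: int and j n :: nat
  assumes n: "n > 0" and L: "0 < L" "L \<le> int n"
  shows "int n * (if \<exists>s. 0 \<le> s \<and> s < L \<and> (U+1+s) mod int n = int j mod int n then 1 else 0)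
    = int (mod1 n U) + L - int (mod1 n (U+L))
      + int n * ((int (mod1 n (U+L)) - int j) div int n - (int (mod1 n U) - int j) div int n)"
proof -
  define a where "a = - ((U-1) div int n)"
  define b where "b = - ((U+L-1) div int n)"
  have ha: "int (mod1 n U) = U + int n * a" using mod1_shift[OF n] a_def by simp
  have hb: "int (mod1 n (U+L)) = U + L + int n * b" using mod1_shift[OF n] b_def by simp
  have d1: "(U + int n * a - int j) div int n = (U - int j) div int n + a"
  proof -
    have e: "U + int n * a - int j = (U - int j) + a * int n" by (simp add: algebra_simps)
    have "(U + int n * a - int j) div int n = ((U - int j) + a * int n) div int n" by (simp only: e)
    then show ?thesis using n by simp
  qed
  have d2: "(U + L + int n * b - int j) div int n = (U + L - int j) div int n + b"
  proof -
    have e: "U + L + int n * b - int j = (U + L - int j) + b * int n" by (simp add: algebra_simps)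
    have "(U + L + int n * b - int j) div int n = ((U + L - int j) + b * int n) div int n" by (simp only: e)
    then show ?thesis using n by simp
  qed
  have c: "(if \<exists>s. 0 \<le> s \<and> s < L \<and> (U+1+s) mod int n = int j mod int n then 1 else 0)
         = (U+L-int j) div int n - (U-int j) div int n"
    using core[of L "int n" U "int j"] L by simp
  show ?thesis unfolding ha hb d1 d2 c by (simp add: algebra_simps)
qed

lemma mod1_mod:
  assumes "n > 0"
  shows "int (mod1 n x) mod int n = x mod int n"
proof -
  have "int (mod1 n x) = (x-1) mod int n + 1" using assms unfolding mod1_def by simp
  then have "int (mod1 n x) mod int n = ((x-1) mod int n + 1) mod int n" by simp
  also have "\<dots> = ((x-1) + 1) mod int n" by (rule mod_add_left_eq)
  finally show ?thesis by simp
qed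

lemma mod1_eq_iff:
  assumes "n > 0" "j \<in> {1..n}"
  shows "mod1 n x = j \<longleftrightarrow> x mod int n = int j mod int n"
proof -
  have "int (mod1 n x) = (x-1) mod int n + 1" using assms unfolding mod1_def by simp
  then have "mod1 n x = j \<longleftrightarrow> (x-1) mod int n = int j - 1" by linarith
  also have "int j - 1 = (int j - 1) mod int n" using assms by simp
  also have "(x-1) mod int n = (int j - 1) mod int n \<longleftrightarrow> x mod int n = int j mod int n"
    by (simp add: mod_eq_dvd_iff)
  finally show ?thesis .
qed

lemma least_k:
  assumes "n > 0" "0 < kk" "kk < n"
  shows "(LEAST t::nat. [ll + t = mod1 n (int ll + int kk)] (mod n)) = kk"
proof (rule Least_equality)
  have "int (mod1 n (int ll + int kk)) mod int n = (int ll + int kk) mod int n"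
    using mod1_mod[OF assms(1)] by simp
  then show "[ll + kk = mod1 n (int ll + int kk)] (mod n)"
    unfolding cong_def by (metis of_nat_add of_nat_eq_iff zmod_int)
next
  fix t assume t: "[ll + t = mod1 n (int ll + int kk)] (mod n)"
  have "int (mod1 n (int ll + int kk)) mod int n = (int ll + int kk) mod int n"
    using mod1_mod[OF assms(1)] by simp
  then have "(int ll + int t) mod int n = (int ll + int kk) mod int n"
    using t unfolding cong_def by (metis of_nat_add zmod_int)
  then have d: "int n dvd (int kk - int t)" by (metis mod_eq_dvd_iff add_diff_cancel_left dvd_minus_iff minus_diff_eq)
  show "kk \<le> t"
  proof (rule ccontr)
    assume "\<not> kk \<le> t"
    then have "0 < int kk - int t" "int kk - int t < int n" using assms by auto
    then show False using d zdvd_not_zless by metis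
  qed
qed

lemma mod1_id:
  assumes "1 \<le> x" "x \<le> int n"
  shows "mod1 n x = nat x"
  using assms unfolding mod1_def by (simp add: mod_pos_pos_trivial)

lemma fwd:
  assumes circ: "circular_rep m n A l k" and r: "r \<in> {1..m+n}" and j: "j \<in> {1..n}"
  shows "int n * Atilde m A r j = int (fwd_tail m n l r) + fwd_len m k r - int (fwd_head m n l k r)
     + int n * ((int (fwd_head m n l k r) - int j) div int n - (int (fwd_tail m n l r) - int j) div int n)"
proof -
  have n: "n > 0" using j by simp
  show ?thesis
  proof (cases "r \<le> m")
    case True
    then have rr: "r \<in> {1..m}" using r by simp
    have lr: "l r \<in> {1..n}" and kr: "2 \<le> k r" "k r \<le> n - 1"
      and Ar: "A r j = (if j \<in> cint n (l r) (mod1 n (int (l r) + int (k r))) then 1 else 0)"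
      using circ rr j unfolding circular_rep_def by auto
    define U where "U = int (l r) - 1"
    define L where "L = int (k r)"
    have L: "0 < L" "L \<le> int n" using kr unfolding L_def by auto
    have ft: "fwd_tail m n l r = mod1 n U" using True unfolding fwd_tail_def U_def by simp
    have fh: "fwd_head m n l k r = mod1 n (U + L)" using True unfolding fwd_head_def U_def L_def
      by (simp add: algebra_simps)
    have fl: "fwd_len m k r = L" using True unfolding fwd_len_def L_def by simp
    have ci: "cint n (l r) (mod1 n (int (l r) + int (k r))) = {mod1 n (int (l r) + int s) | s. s < k r}"
      unfolding cint_def Let_def using least_k[OF n, of "k r" "l r"] kr by simp
    have mem: "j \<in> cint n (l r) (mod1 n (int (l r) + int (k r))) \<longleftrightarrow>
        (\<exists>s. 0 \<le> s \<and> s < L \<and> (U+1+s) mod int n = int j mod int n)"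
    proof
      assume "j \<in> cint n (l r) (mod1 n (int (l r) + int (k r)))"
      then obtain s where s: "s < k r" "mod1 n (int (l r) + int s) = j" unfolding ci by auto
      then have "(int (l r) + int s) mod int n = int j mod int n" using mod1_eq_iff[OF n j] by simp
      then have "(U+1+int s) mod int n = int j mod int n" unfolding U_def by simp
      moreover have "0 \<le> int s" "int s < L" using s unfolding L_def by auto
      ultimately show "\<exists>s. 0 \<le> s \<and> s < L \<and> (U+1+s) mod int n = int j mod int n" by blast
    next
      assume "\<exists>s. 0 \<le> s \<and> s < L \<and> (U+1+s) mod int n = int j mod int n"
      then obtain s where s: "0 \<le> s" "s < L" "(U+1+s) mod int n = int j mod int n" by blast
      define t where "t = nat s"
      have "s = int t" using s unfolding t_def by simp
      then have "(int (l r) + int t) mod int n = int j mod int n" using s unfolding U_def by simp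
      then have "mod1 n (int (l r) + int t) = j" using mod1_eq_iff[OF n j] by simp
      moreover have "t < k r" using s \<open>s = int t\<close> unfolding L_def by simp
      ultimately show "j \<in> cint n (l r) (mod1 n (int (l r) + int (k r)))" unfolding ci by auto
    qed
    have At: "Atilde m A r j = (if \<exists>s. 0 \<le> s \<and> s < L \<and> (U+1+s) mod int n = int j mod int n then 1 else 0)"
      unfolding Atilde_def using True Ar mem by simp
    show ?thesis unfolding At ft fh fl using gen[OF n L, of U j] by simp
  next
    case False
    define U where "U = int (r - m) - 1"
    have L: "(0::int) < 1" "1 \<le> int n" using n by auto
    have rm: "1 \<le> r - m" "r - m \<le> n" using False r by auto
    have ft: "fwd_tail m n l r = mod1 n U" using False unfolding fwd_tail_def U_def by simp
    have fh: "fwd_head m n l k r = mod1 n (U + 1)" using False unfolding fwd_head_def U_def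
      by (simp add: algebra_simps)
    have fl: "fwd_len m k r = 1" using False unfolding fwd_len_def by simp
    have mod1rm: "mod1 n (int (r - m)) = r - m" using mod1_id[of "int (r-m)" n] rm by simp
    have mem: "r - m = j \<longleftrightarrow> (\<exists>s. 0 \<le> s \<and> s < 1 \<and> (U+1+s) mod int n = int j mod int n)"
    proof -
      have "(\<exists>s::int. 0 \<le> s \<and> s < 1 \<and> (U+1+s) mod int n = int j mod int n) \<longleftrightarrow>
            (U+1) mod int n = int j mod int n"
      proof
        assume "\<exists>s::int. 0 \<le> s \<and> s < 1 \<and> (U+1+s) mod int n = int j mod int n"
        then obtain s::int where "0 \<le> s" "s < 1" "(U+1+s) mod int n = int j mod int n" by blast
        moreover have "s = 0" using calculation by simp
        ultimately show "(U+1) mod int n = int j mod int n" by simp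
      next
        assume "(U+1) mod int n = int j mod int n"
        then show "\<exists>s::int. 0 \<le> s \<and> s < 1 \<and> (U+1+s) mod int n = int j mod int n"
          by (intro exI[of _ 0]) simp
      qed
      also have "\<dots> \<longleftrightarrow> mod1 n (int (r - m)) = j" using mod1_eq_iff[OF n j] unfolding U_def by simp
      finally show ?thesis using mod1rm by simp
    qed
    have At: "Atilde m A r j = (if \<exists>s. 0 \<le> s \<and> s < 1 \<and> (U+1+s) mod int n = int j mod int n then 1 else 0)"
      unfolding Atilde_def using False mem by simp
    show ?thesis unfolding At ft fh fl using gen[OF n L, of U j] by simp
  qed
qed

lemma arc_eq:
  assumes circ: "circular_rep m n A l k" and e: "e \<in> arcs m n" and j: "j \<in> {1..n}"
  shows "int n * (if fst e then Atilde m A (snd e) j else - Atilde m A (snd e) j)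
    = int (arc_tail m n l k e) + arc_len m k e - int (arc_head m n l k e)
      + int n * ((int (arc_head m n l k e) - int j) div int n - (int (arc_tail m n l k e) - int j) div int n)"
proof -
  have r: "snd e \<in> {1..m+n}" using e unfolding arcs_def by auto
  note f = fwd[OF circ r j]
  show ?thesis
  proof (cases "fst e")
    case True
    then show ?thesis using f unfolding arc_tail_def arc_head_def arc_len_def by simp
  next
    case False
    then show ?thesis using f unfolding arc_tail_def arc_head_def arc_len_def
      by (simp add: algebra_simps)
  qed
qed

lemma sum_rotate:
  fixes h :: "nat \<Rightarrow> int"
  assumes "L > 0"
  shows "(\<Sum>i<L. h ((i+1) mod L)) = (\<Sum>i<L. h i)"
proof -
  obtain L' where L': "L = Suc L'" using assms by (cases L) auto
  have "(\<Sum>i<Suc L'. h ((i+1) mod Suc L')) = (\<Sum>i<L'. h ((i+1) mod Suc L')) + h ((L'+1) mod Suc L')"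
    by simp
  also have "(\<Sum>i<L'. h ((i+1) mod Suc L')) = (\<Sum>i<L'. h (Suc i))"
    by (rule sum.cong) auto
  also have "(L'+1) mod Suc L' = 0" by simp
  also have "(\<Sum>i<L'. h (Suc i)) + h 0 = (\<Sum>i<Suc L'. h i)"
    by (subst sum.lessThan_Suc_shift) simp
  finally show ?thesis using L' by simp
qed

lemma telescope:
  fixes F :: "nat \<Rightarrow> int"
  assumes c: "is_circuit m n l k cs"
  shows "(\<Sum>e\<leftarrow>cs. F (arc_head m n l k e) - F (arc_tail m n l k e)) = 0"
proof -
  let ?L = "length cs"
  have L: "?L > 0" using c unfolding is_circuit_def by simp
  have hd: "\<forall>i < ?L. arc_head m n l k (cs ! i) = arc_tail m n l k (cs ! ((i + 1) mod ?L))"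
    using c unfolding is_circuit_def by simp
  have "(\<Sum>e\<leftarrow>cs. F (arc_head m n l k e) - F (arc_tail m n l k e))
      = (\<Sum>i<?L. F (arc_head m n l k (cs!i)) - F (arc_tail m n l k (cs!i)))"
    by (simp add: sum_list_sum_nth atLeast0LessThan)
  also have "\<dots> = (\<Sum>i<?L. F (arc_head m n l k (cs!i))) - (\<Sum>i<?L. F (arc_tail m n l k (cs!i)))"
    by (simp add: sum_subtractf)
  also have "(\<Sum>i<?L. F (arc_head m n l k (cs!i))) = (\<Sum>i<?L. F (arc_tail m n l k (cs!((i+1) mod ?L))))"
    using hd by (intro sum.cong) auto
  also have "\<dots> = (\<Sum>i<?L. F (arc_tail m n l k (cs!i)))"
    using sum_rotate[OF L, of "\<lambda>i. F (arc_tail m n l k (cs!i))"] by simp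
  finally show ?thesis by simp
qed

lemma sum_prod_split: "(\<Sum>e\<in>A \<times> B. h e) = (\<Sum>d\<in>A. \<Sum>r\<in>B. h (d, r))"
  by (subst sum.cartesian_product) (simp only: case_prod_eta)

theorem corollary4p2:
  fixes m n :: nat and A :: "nat \<Rightarrow> nat \<Rightarrow> int" and l k :: "nat \<Rightarrow> nat"
    and \<Gamma> :: "arc list"
  assumes "circular_rep m n A l k"
    and "is_circuit m n l k \<Gamma>"
  shows "\<forall>j\<in>{1..n}.
           real_of_int (\<Sum>r=1..m+n. (pi_plus \<Gamma> r - pi_minus \<Gamma> r) * Atilde m A r j)
             = winding m n k \<Gamma>"
proof
  fix j assume j: "j \<in> {1..n}"
  have n: "n > 0" using j by simp
  define c where "c e = (if fst e then Atilde m A (snd e) j else - Atilde m A (snd e) j)" for e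
  have sub: "set \<Gamma> \<subseteq> UNIV \<times> {1..m+n}" using assms(2) unfolding is_circuit_def arcs_def by auto
  have dist: "distinct \<Gamma>" using assms(2) unfolding is_circuit_def by simp
  have S1: "(\<Sum>r=1..m+n. (pi_plus \<Gamma> r - pi_minus \<Gamma> r) * Atilde m A r j) = (\<Sum>e\<in>set \<Gamma>. c e)"
  proof -
    have "(\<Sum>e\<in>set \<Gamma>. c e) = (\<Sum>e\<in>(UNIV \<times> {1..m+n}) \<inter> set \<Gamma>. c e)"
      using sub by (simp add: Int_absorb1)
    also have "\<dots> = (\<Sum>e\<in>UNIV \<times> {1..m+n}. if e \<in> set \<Gamma> then c e else 0)"
      by (rule sum.inter_restrict) simp
    also have "\<dots> = (\<Sum>d\<in>UNIV. \<Sum>r\<in>{1..m+n}. if (d, r) \<in> set \<Gamma> then c (d, r) else 0)"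
      by (rule sum_prod_split)
    also have "\<dots> = (\<Sum>r\<in>{1..m+n}. (if (True, r) \<in> set \<Gamma> then c (True, r) else 0))
                  + (\<Sum>r\<in>{1..m+n}. (if (False, r) \<in> set \<Gamma> then c (False, r) else 0))"
      by (simp add: UNIV_bool)
    also have "\<dots> = (\<Sum>r=1..m+n. (pi_plus \<Gamma> r - pi_minus \<Gamma> r) * Atilde m A r j)"
      unfolding sum.distrib[symmetric] by (rule sum.cong) (auto simp: c_def pi_plus_def pi_minus_def)
    finally show ?thesis by simp
  qed
  define g where "g x = (int x - int j) div int n" for x
  have S2: "int n * (\<Sum>e\<in>set \<Gamma>. c e) = (\<Sum>e\<in>set \<Gamma>. arc_len m k e)"
  proof -
    have "int n * (\<Sum>e\<in>set \<Gamma>. c e) = (\<Sum>e\<leftarrow>\<Gamma>. int n * c e)"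
      using dist by (simp add: sum_list_distinct_conv_sum_set sum_distrib_left)
    also have "\<dots> = (\<Sum>e\<leftarrow>\<Gamma>. arc_len m k e
         + (int (arc_tail m n l k e) - int (arc_head m n l k e))
         + int n * (g (arc_head m n l k e) - g (arc_tail m n l k e)))"
    proof (rule arg_cong[where f=sum_list], rule map_cong[OF refl])
      fix e assume "e \<in> set \<Gamma>"
      then have "e \<in> arcs m n" using assms(2) unfolding is_circuit_def by auto
      then show "int n * c e = arc_len m k e
         + (int (arc_tail m n l k e) - int (arc_head m n l k e))
         + int n * (g (arc_head m n l k e) - g (arc_tail m n l k e))"
        using arc_eq[OF assms(1) _ j] unfolding c_def g_def by (simp add: algebra_simps)
    qed
    also have "\<dots> = (\<Sum>e\<leftarrow>\<Gamma>. arc_len m k e)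
         + (\<Sum>e\<leftarrow>\<Gamma>. int (arc_tail m n l k e) - int (arc_head m n l k e))
         + int n * (\<Sum>e\<leftarrow>\<Gamma>. g (arc_head m n l k e) - g (arc_tail m n l k e))"
      by (simp add: sum_list_addf sum_list_const_mult)
    also have "(\<Sum>e\<leftarrow>\<Gamma>. g (arc_head m n l k e) - g (arc_tail m n l k e)) = 0"
      by (rule telescope[OF assms(2)])
    also have "(\<Sum>e\<leftarrow>\<Gamma>. int (arc_tail m n l k e) - int (arc_head m n l k e))
       = - (\<Sum>e\<leftarrow>\<Gamma>. int (arc_head m n l k e) - int (arc_tail m n l k e))"
      by (simp add: sum_list_subtractf)
    also have "(\<Sum>e\<leftarrow>\<Gamma>. int (arc_head m n l k e) - int (arc_tail m n l k e)) = 0"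
      by (rule telescope[OF assms(2)])
    finally show ?thesis using dist by (simp add: sum_list_distinct_conv_sum_set)
  qed
  have "real_of_int (\<Sum>e\<in>set \<Gamma>. c e) = real_of_int (\<Sum>e\<in>set \<Gamma>. arc_len m k e) / real n"
  proof -
    have "real n * real_of_int (\<Sum>e\<in>set \<Gamma>. c e) = real_of_int (\<Sum>e\<in>set \<Gamma>. arc_len m k e)"
      using arg_cong[OF S2, of real_of_int] by simp
    then show ?thesis using n by (simp add: field_simps)
  qed
  then show "real_of_int (\<Sum>r=1..m+n. (pi_plus \<Gamma> r - pi_minus \<Gamma> r) * Atilde m A r j)
             = winding m n k \<Gamma>" unfolding S1 winding_def .
qed

end
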